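(* Assume that $d_k^2 < 2p_{k+1}$ for every $k\geq1$. Then for every $n\geq 1$, $d_n \leq 2\lfloor\sqrt{p_n}\rfloor$; moreover, if $d_n = 2\lfloor \sqrt{p_n}\rfloor$ then $\lfloor\sqrt{p_{n+1}}\rfloor = \lfloor\sqrt{p_n}\rfloor + 1$.
   Context: $p_k$ denotes the $k$th prime ($p_1=2$) and $d_k := p_{k+1}-p_k$. *)

theory Defs
  imports Complex_Main "HOL-Computational_Algebra.Primes" "HOL-Library.Infinite_Set"
begin

text \<open>The k-th prime, 1-indexed: pr 1 = 2, pr 2 = 3, ...
  (enumerate is 0-indexed, hence the shift; pr 0 is a junk value and never used.)\<close>
definition pr :: "nat \<Rightarrow> nat" where
  "pr k = enumerate {p::nat. prime p} (k - 1)"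

definition gap :: "nat \<Rightarrow> nat" where
  "gap k = pr (Suc k) - pr k"

end

theory Submission
  imports Defs
begin

lemma pr_prime: "prime (pr n)"
  unfolding pr_def using enumerate_in_set[OF primes_infinite] by blast

lemma pr_less: "n \<ge> 1 \<Longrightarrow> pr n < pr (Suc n)"
  unfolding pr_def using primes_infinite by (simp add: enumerate_mono_iff)

lemma pr_between: assumes "n \<ge> 1" "pr n < r" "r < pr (Suc n)" shows "\<not> prime r"
proof
  assume "prime r"
  then obtain j where j: "enumerate {p::nat. prime p} j = r"
    using enumerate_Ex[OF primes_infinite] by blast
  have "n - 1 < j" "j < n" using assms j primes_infinite unfolding pr_def
    by (metis Suc_diff_1 diff_Suc_1 enumerate_mono_iff less_le_trans not_less_eq le_add1 plus_1_eq_Suc)+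
  then show False by simp
qed

lemma floor_sqrt_nat:
  fixes p :: nat
  obtains k :: nat where "\<lfloor>sqrt (real p)\<rfloor> = int k" "k^2 \<le> p" "p < (k+1)^2"
proof -
  define k where "k = nat \<lfloor>sqrt (real p)\<rfloor>"
  have f: "\<lfloor>sqrt (real p)\<rfloor> = int k" unfolding k_def by simp
  have a1: "real k \<le> sqrt p" using f by linarith
  have a2: "sqrt p < real k + 1" using f by linarith
  have "real k ^ 2 \<le> sqrt p ^ 2" using a1 by (intro power_mono) auto
  hence "real (k^2) \<le> real p" by simp
  moreover have "sqrt p ^ 2 < (real k + 1) ^ 2" using a2 by (intro power_strict_mono) auto
  hence "real p < real ((k+1)^2)" by (simp add: add.commute)
  ultimately show ?thesis using that f by (simp only: of_nat_le_iff of_nat_less_iff)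
qed

theorem theorem6p1:
  assumes "\<forall>k\<ge>1. real (gap k) ^ 2 < 2 * real (pr (Suc k))"
  shows "\<forall>n\<ge>1. real (gap n) \<le> 2 * of_int \<lfloor>sqrt (real (pr n))\<rfloor> \<and>
           (real (gap n) = 2 * of_int \<lfloor>sqrt (real (pr n))\<rfloor> \<longrightarrow>
              \<lfloor>sqrt (real (pr (Suc n)))\<rfloor> = \<lfloor>sqrt (real (pr n))\<rfloor> + 1)"
proof (intro allI impI conjI)
  fix n :: nat assume n: "n \<ge> 1"
  define p where "p = pr n"
  define q where "q = pr (Suc n)"
  define d where "d = q - p"
  have pp: "prime p" and pq: "prime q" unfolding p_def q_def by (rule pr_prime)+
  have pq_less: "p < q" unfolding p_def q_def using pr_less n by blast
  have btw: "\<And>r. p < r \<Longrightarrow> r < q \<Longrightarrow> \<not> prime r" unfolding p_def q_def using pr_between n by blast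
  have gd: "gap n = d" unfolding gap_def d_def p_def q_def by simp
  have q_eq: "q = p + d" using pq_less d_def by simp
  have h0: "real (gap n) ^ 2 < 2 * real q" using assms n q_def by auto
  have "real (d^2) < real (2 * q)" using h0 gd by simp
  hence "d^2 < 2 * q" by (simp only: of_nat_less_iff)
  hence hyp: "d^2 < 2 * p + 2 * d" using q_eq by linarith
  obtain k where kf: "\<lfloor>sqrt (real p)\<rfloor> = int k" and k1: "k^2 \<le> p" and k2: "p < (k+1)^2"
    using floor_sqrt_nat by blast
  have p2: "p \<ge> 2" using pp prime_ge_2_nat by blast
  have c1: "d \<le> 2 * k"
  proof (cases "p = 2")
    case True
    have p3: "prime (3::nat)"
    proof -
      have "\<And>n::nat. n dvd 3 \<Longrightarrow> 2 \<le> n \<Longrightarrow> n < 3 \<Longrightarrow> False"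
      proof -
        fix n :: nat assume "n dvd 3" "2 \<le> n" "n < 3"
        then have "n = 2" by linarith
        with \<open>n dvd 3\<close> show False by simp
      qed
      then show ?thesis by (auto simp add: prime_nat_iff')
    qed
    have "q \<le> 3"
    proof (rule ccontr)
      assume "\<not> q \<le> 3"
      then show False using btw[of 3] True p3 by simp
    qed
    moreover have "k \<ge> 1" using k2 True by (cases k) auto
    ultimately show ?thesis using True q_eq by linarith
  next
    case False
    have "p > 2" using False p2 by linarith
    hence "odd p" using pp prime_odd_nat by blast
    moreover have "q > 2" using pq_less \<open>p > 2\<close> by linarith
    hence "odd q" using pq prime_odd_nat by blast
    ultimately have ev: "even d" using q_eq by simp
    show ?thesis
    proof (rule ccontr)
      assume "\<not> d \<le> 2 * k"
      with ev have dk: "d \<ge> 2 * k + 2" by presburger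
      then obtain e where e: "d = 2 * k + 2 + e" using le_Suc_ex by blast
      have "p \<le> k^2 + 2 * k" using k2 by (simp add: power2_eq_square)
      moreover have "d^2 \<ge> 4*k^2 + 8*k + 4 + 2*e" unfolding e by (simp add: power2_eq_square algebra_simps)
      ultimately show False using hyp e by linarith
    qed
  qed
  show "real (gap n) \<le> 2 * of_int \<lfloor>sqrt (real (pr n))\<rfloor>"
    using c1 gd kf p_def by simp
  assume "real (gap n) = 2 * of_int \<lfloor>sqrt (real (pr n))\<rfloor>"
  hence dk: "d = 2 * k" using gd kf p_def by simp
  have "p \<noteq> k^2"
  proof
    assume "p = k^2"
    then have "prime (k * k)" using pp by (simp add: power2_eq_square)
    then show False using prime_product[of k k] by auto
  qed
  hence q1: "(k+1)^2 \<le> q" using k1 q_eq dk by (simp add: power2_eq_square)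
  have q2: "q < (k+2)^2" using k2 q_eq dk by (simp add: power2_eq_square)
  have "real ((k+1)^2) \<le> real q" using q1 by (simp only: of_nat_le_iff)
  hence "real (k+1) ^ 2 \<le> real q" by (simp only: of_nat_power)
  hence "real (k+1) \<le> sqrt (real q)" by (rule real_le_rsqrt)
  moreover have "real q < real ((k+2)^2)" using q2 by (simp only: of_nat_less_iff)
  hence "sqrt (real q) < sqrt (real (k+2) ^ 2)" by (simp only: of_nat_power real_sqrt_less_iff)
  hence "sqrt (real q) < real (k+2)" by simp
  ultimately have "\<lfloor>sqrt (real q)\<rfloor> = int k + 1" by (simp add: floor_eq_iff)
  then show "\<lfloor>sqrt (real (pr (Suc n)))\<rfloor> = \<lfloor>sqrt (real (pr n))\<rfloor> + 1"
    using kf p_def q_def by simp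
qed

end
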